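(* Let $L$ be any language over alphabet $\Sigma$. The following two statements are logically equivalent. 1. $L\in\mathrm{1QFA}/Rn$. 2. There exist a 1qfa $M$ with read-only tape tracks, an advice alphabet $\Gamma$, a series $\Phi=\{|\phi_n\rangle\}_{n\in\mathbb{N}}$ of quantum advice states ($|\phi_n\rangle$ a normalized state in $\mathrm{span}\{|s\rangle\mid s\in\Gamma^n\}$), and an error bound $\varepsilon\in[0,1/2)$ satisfying $\Pr_M\big[M(\genfrac{[}{]}{0pt}{}{x}{\phi_{|x|}})=L(x)\big]\geq1-\varepsilon$ for any input $x\in\Sigma^*$.
   Context: A 1qfa is a one-way measure-many quantum finite automaton. For equal-length strings $x,y$, $\genfrac{[}{]}{0pt}{}{x}{y}$ is the two-track string with $x$ on the upper track and $y$ on the lower track. $\mathrm{1QFA}/Rn$ is the family of languages $L$ for which there exist a 1qfa $M$, $\varepsilon\in[0,1/2)$, an advice alphabet $\Gamma$ and randomized advice $\{D_n\}$ ($D_n$ a distribution on $\Gamma^n$) such that for every $n$ and $x\in\Sigma^n$, $M$ on $\genfrac{[}{]}{0pt}{}{x}{y}$ with $y\sim D_n$ outputs $L(x)$ with probability at least $1-\varepsilon$. With quantum advice $|\phi_n\rangle=\sum_{s\in\Gamma^n}\alpha_s|s\rangle$, $|\genfrac{[}{]}{0pt}{}{x}{\phi_n}\rangle=\sum_s\alpha_s|\genfrac{[}{]}{0pt}{}{x}{s}\rangle$; the 1qfa works on the space spanned by $|q\rangle|y\rangle$ ($q$ an inner state, $y\in\Gamma^n$), starts in $|q_0\rangle|\phi_n\rangle$,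 and at step $i$ applies a unitary acting on its inner state and the $i$th tape cell; since both tracks are read-only it cannot change the advice content. Measurements are on the inner-state register after each step, and $\Pr_M[M(\genfrac{[}{]}{0pt}{}{x}{\phi_{|x|}})=L(x)]$ is the total probability of outputting $L(x)$. *)

theory Defs
  imports Complex_Main "HOL-Probability.Probability_Mass_Function"
begin

text \<open>Tape symbols of a 1qfa with a two-track (input / advice) tape:
  the left endmarker, the right endmarker, and two-track cells (input symbol, advice symbol).\<close>
datatype ('a, 'g) tsym = LEnd | REnd | Cell 'a 'g

text \<open>A measure-many 1qfa. Inner states and advice symbols are drawn from nat
  (finite subsets of nat are used for the state set and the advice alphabet).
  delta s q p is the matrix entry of the unitary U_s applied when scanning s.\<close>
record 'a qfa =
  states :: "nat set"
  init   :: nat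
  accs   :: "nat set"
  rejs   :: "nat set"
  delta  :: "('a, nat) tsym \<Rightarrow> nat \<Rightarrow> nat \<Rightarrow> complex"

definition unitary_on :: "nat set \<Rightarrow> (nat \<Rightarrow> nat \<Rightarrow> complex) \<Rightarrow> bool" where
  "unitary_on Q U \<longleftrightarrow>
     (\<forall>p\<in>Q. \<forall>p'\<in>Q. (\<Sum>q\<in>Q. cnj (U q p) * U q p') = (if p = p' then 1 else 0))"

definition tape_syms :: "nat set \<Rightarrow> ('a, nat) tsym set" where
  "tape_syms \<Gamma> = {LEnd, REnd} \<union> {Cell a g | a g. g \<in> \<Gamma>}"

definition is_1qfa :: "'a qfa \<Rightarrow> nat set \<Rightarrow> bool" where
  "is_1qfa M \<Gamma> \<longleftrightarrow> finite (states M) \<and> init M \<in> states M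
     \<and> accs M \<subseteq> states M \<and> rejs M \<subseteq> states M \<and> accs M \<inter> rejs M = {}
     \<and> init M \<notin> accs M \<union> rejs M
     \<and> (\<forall>s\<in>tape_syms \<Gamma>. unitary_on (states M) (delta M s))"

text \<open>Global state: amplitude of |q>|y> (inner state q, advice content y).\<close>
type_synonym gstate = "nat \<Rightarrow> nat list \<Rightarrow> complex"

text \<open>One step: apply the unitary determined by the currently scanned cell (whose advice
  component depends on the advice content y), acting on the inner state only.\<close>
definition qstep :: "'a qfa \<Rightarrow> (nat list \<Rightarrow> ('a, nat) tsym) \<Rightarrow> gstate \<Rightarrow> gstate" where
  "qstep M c \<Psi> = (\<lambda>q y. \<Sum>p\<in>states M. delta M (c y) q p * \<Psi> p y)"

definition restrict_states :: "nat set \<Rightarrow> gstate \<Rightarrow> gstate" where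
  "restrict_states A \<Psi> = (\<lambda>q y. if q \<in> A then \<Psi> q y else 0)"

definition mass :: "nat list set \<Rightarrow> nat set \<Rightarrow> gstate \<Rightarrow> real" where
  "mass Y A \<Psi> = (\<Sum>y\<in>Y. \<Sum>q\<in>A. (cmod (\<Psi> q y))\<^sup>2)"

fun out_prob :: "'a qfa \<Rightarrow> nat list set \<Rightarrow> nat set \<Rightarrow> (nat list \<Rightarrow> ('a, nat) tsym) list
                  \<Rightarrow> gstate \<Rightarrow> real" where
  "out_prob M Y A [] \<Psi> = 0"
| "out_prob M Y A (c # cs) \<Psi> =
     (let \<Psi>' = qstep M c \<Psi>
      in mass Y A \<Psi>' + out_prob M Y A cs (restrict_states (states M - accs M - rejs M) \<Psi>'))"

definition tape :: "'a list \<Rightarrow> (nat list \<Rightarrow> ('a, nat) tsym) list" where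
  "tape x = [\<lambda>y. LEnd] @ map (\<lambda>i y. Cell (x ! i) (y ! i)) [0..<length x] @ [\<lambda>y. REnd]"

definition adv_strings :: "nat set \<Rightarrow> nat \<Rightarrow> nat list set" where
  "adv_strings \<Gamma> n = {y. set y \<subseteq> \<Gamma> \<and> length y = n}"

definition prob_output :: "'a qfa \<Rightarrow> nat set \<Rightarrow> 'a list \<Rightarrow> (nat list \<Rightarrow> complex) \<Rightarrow> bool \<Rightarrow> real" where
  "prob_output M \<Gamma> x \<phi> b =
     out_prob M (adv_strings \<Gamma> (length x)) (if b then accs M else rejs M) (tape x)
       (\<lambda>q y. if q = init M then \<phi> y else 0)"

definition qadvice :: "nat set \<Rightarrow> nat \<Rightarrow> (nat list \<Rightarrow> complex) \<Rightarrow> bool" where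
  "qadvice \<Gamma> n \<phi> \<longleftrightarrow> (\<forall>y. y \<notin> adv_strings \<Gamma> n \<longrightarrow> \<phi> y = 0)
     \<and> (\<Sum>y\<in>adv_strings \<Gamma> n. (cmod (\<phi> y))\<^sup>2) = 1"

definition basis_adv :: "nat list \<Rightarrow> nat list \<Rightarrow> complex" where
  "basis_adv y = (\<lambda>z. if z = y then 1 else 0)"

definition in_1QFA_Rn :: "'a list set \<Rightarrow> bool" where
  "in_1QFA_Rn L \<longleftrightarrow> (\<exists>(M :: 'a qfa) \<Gamma> \<epsilon> (D :: nat \<Rightarrow> nat list pmf).
     finite \<Gamma> \<and> is_1qfa M \<Gamma> \<and> 0 \<le> \<epsilon> \<and> \<epsilon> < 1/2
     \<and> (\<forall>n. set_pmf (D n) \<subseteq> adv_strings \<Gamma> n)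
     \<and> (\<forall>x. measure_pmf.expectation (D (length x))
              (\<lambda>y. prob_output M \<Gamma> x (basis_adv y) (x \<in> L)) \<ge> 1 - \<epsilon>))"

end

theory Submission
  imports Defs
begin

lemma mass_split: "finite Y \<Longrightarrow> mass Y A \<Psi> = (\<Sum>y\<in>Y. mass {y} A \<Psi>)"
  by (simp add: mass_def)

lemma out_split: "finite Y \<Longrightarrow> out_prob M Y A cs \<Psi> = (\<Sum>y\<in>Y. out_prob M {y} A cs \<Psi>)"
  by (induction cs arbitrary: \<Psi>) (simp_all add: Let_def mass_split[of Y] sum.distrib)

lemma out_local: "(\<And>q. \<Psi> q y = \<Psi>' q y) \<Longrightarrow> out_prob M {y} A cs \<Psi> = out_prob M {y} A cs \<Psi>'"
proof (induction cs arbitrary: \<Psi> \<Psi>')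
  case Nil then show ?case by simp
next
  case (Cons c cs)
  have q: "\<And>q. qstep M c \<Psi> q y = qstep M c \<Psi>' q y" using Cons.prems by (simp add: qstep_def)
  have m: "mass {y} A (qstep M c \<Psi>) = mass {y} A (qstep M c \<Psi>')" using q by (simp add: mass_def)
  have r: "\<And>q. restrict_states (states M - accs M - rejs M) (qstep M c \<Psi>) q y = restrict_states (states M - accs M - rejs M) (qstep M c \<Psi>') q y"
    using q by (simp add: restrict_states_def)
  show ?case using m Cons.IH[of "restrict_states (states M - accs M - rejs M) (qstep M c \<Psi>)" "restrict_states (states M - accs M - rejs M) (qstep M c \<Psi>')", OF r] by (simp add: Let_def)
qed

lemma out_scale: "out_prob M Y A cs (\<lambda>q z. k * \<Psi> q z) = (cmod k)^2 * out_prob M Y A cs \<Psi>"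
proof (induction cs arbitrary: \<Psi>)
  case Nil then show ?case by simp
next
  case (Cons c cs)
  have q: "qstep M c (\<lambda>q z. k * \<Psi> q z) = (\<lambda>q z. k * qstep M c \<Psi> q z)"
    by (simp add: qstep_def sum_distrib_left mult.left_commute)
  have m: "mass Y A (\<lambda>q z. k * F q z) = (cmod k)^2 * mass Y A F" for F
    by (simp add: mass_def norm_mult power_mult_distrib sum_distrib_left)
  have r: "restrict_states S (\<lambda>q z. k * F q z) = (\<lambda>q z. k * restrict_states S F q z)" for S F
    by (auto simp: restrict_states_def fun_eq_iff)
  show ?case by (simp add: Let_def q m r Cons.IH distrib_left)
qed

lemma out_zero: "out_prob M Y A cs (\<lambda>q z. 0) = 0"
  using out_scale[of M Y A cs 0 "\<lambda>q z. 0"] by simp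

lemma decomp:
  assumes fin: "finite \<Gamma>"
  shows "prob_output M \<Gamma> x \<phi> b =
    (\<Sum>y\<in>adv_strings \<Gamma> (length x). (cmod (\<phi> y))^2 * prob_output M \<Gamma> x (basis_adv y) b)"
proof -
  let ?Y = "adv_strings \<Gamma> (length x)"
  let ?A = "if b then accs M else rejs M"
  let ?B = "\<lambda>y. (\<lambda>q z. if q = init M then basis_adv y z else (0::complex))"
  have finY: "finite ?Y" unfolding adv_strings_def using finite_lists_length_eq[OF fin] by simp
  have b1: "prob_output M \<Gamma> x (basis_adv y) b = out_prob M {y} ?A (tape x) (?B y)"
    if "y \<in> ?Y" for y
  proof -
    have "prob_output M \<Gamma> x (basis_adv y) b = (\<Sum>y'\<in>?Y. out_prob M {y'} ?A (tape x) (?B y))"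
      unfolding prob_output_def by (rule out_split[OF finY])
    also have "\<dots> = out_prob M {y} ?A (tape x) (?B y) + (\<Sum>y'\<in>?Y-{y}. out_prob M {y'} ?A (tape x) (?B y))"
      by (rule sum.remove[OF finY that])
    also have "(\<Sum>y'\<in>?Y-{y}. out_prob M {y'} ?A (tape x) (?B y)) = 0"
    proof (rule sum.neutral, rule ballI)
      fix y' assume "y' \<in> ?Y - {y}"
      then have "out_prob M {y'} ?A (tape x) (?B y) = out_prob M {y'} ?A (tape x) (\<lambda>q z. 0)"
        by (intro out_local) (auto simp: basis_adv_def)
      then show "out_prob M {y'} ?A (tape x) (?B y) = 0" by (simp add: out_zero)
    qed
    finally show ?thesis by simp
  qed
  have "prob_output M \<Gamma> x \<phi> b = (\<Sum>y\<in>?Y. out_prob M {y} ?A (tape x) (\<lambda>q z. if q = init M then \<phi> z else 0))"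
    unfolding prob_output_def by (rule out_split[OF finY])
  also have "\<dots> = (\<Sum>y\<in>?Y. out_prob M {y} ?A (tape x) (\<lambda>q z. \<phi> y * ?B y q z))"
    by (intro sum.cong refl out_local) (simp add: basis_adv_def)
  also have "\<dots> = (\<Sum>y\<in>?Y. (cmod (\<phi> y))^2 * prob_output M \<Gamma> x (basis_adv y) b)"
    by (intro sum.cong refl) (simp add: out_scale b1)
  finally show ?thesis .
qed

lemma finite_adv: assumes "finite \<Gamma>" shows "finite (adv_strings \<Gamma> n)"
  unfolding adv_strings_def using finite_lists_length_eq[OF assms] by simp

lemma expect_eq:
  assumes fin: "finite \<Gamma>" and sup: "set_pmf D \<subseteq> adv_strings \<Gamma> (length x)"
  shows "measure_pmf.expectation D (\<lambda>y. prob_output M \<Gamma> x (basis_adv y) b)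
       = (\<Sum>y\<in>adv_strings \<Gamma> (length x). pmf D y * prob_output M \<Gamma> x (basis_adv y) b)"
  by (subst integral_measure_pmf[OF finite_adv[OF fin]]) (use sup in auto)

lemma embed_ok:
  assumes fin: "finite \<Gamma>" and q: "qadvice \<Gamma> n \<phi>"
  shows "pmf (embed_pmf (\<lambda>y. (cmod (\<phi> y))^2)) y = (cmod (\<phi> y))^2"
proof (rule pmf_embed_pmf)
  show "(\<integral>\<^sup>+y. ennreal ((cmod (\<phi> y))^2) \<partial>count_space UNIV) = 1"
  proof -
    have "(\<integral>\<^sup>+y. ennreal ((cmod (\<phi> y))^2) \<partial>count_space UNIV)
        = (\<Sum>y\<in>adv_strings \<Gamma> n. ennreal ((cmod (\<phi> y))^2))"
      using q by (intro nn_integral_count_space'[OF finite_adv[OF fin]]) (auto simp: qadvice_def)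
    also have "\<dots> = ennreal (\<Sum>y\<in>adv_strings \<Gamma> n. (cmod (\<phi> y))^2)"
      by (rule sum_ennreal) simp
    also have "\<dots> = 1" using q by (simp add: qadvice_def)
    finally show ?thesis .
  qed
qed simp

theorem proposition5p4:
  fixes L :: "'a::finite list set"
  shows "in_1QFA_Rn L \<longleftrightarrow>
    (\<exists>(M :: 'a qfa) \<Gamma> (\<Phi> :: nat \<Rightarrow> nat list \<Rightarrow> complex) \<epsilon>.
       finite \<Gamma> \<and> is_1qfa M \<Gamma> \<and> (\<forall>n. qadvice \<Gamma> n (\<Phi> n))
       \<and> 0 \<le> \<epsilon> \<and> \<epsilon> < 1/2
       \<and> (\<forall>x. prob_output M \<Gamma> x (\<Phi> (length x)) (x \<in> L) \<ge> 1 - \<epsilon>))"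
proof
  assume "in_1QFA_Rn L"
  then obtain M :: "'a qfa" and \<Gamma> \<epsilon> D where
    fin: "finite \<Gamma>" and M: "is_1qfa M \<Gamma>" and e: "0 \<le> \<epsilon>" "\<epsilon> < 1/2"
    and sup: "\<And>n. set_pmf (D n) \<subseteq> adv_strings \<Gamma> n"
    and pr: "\<And>x. measure_pmf.expectation (D (length x))
              (\<lambda>y. prob_output M \<Gamma> x (basis_adv y) (x \<in> L)) \<ge> 1 - \<epsilon>"
    unfolding in_1QFA_Rn_def by blast
  define \<Phi> where "\<Phi> n y = complex_of_real (sqrt (pmf (D n) y))" for n y
  have c: "(cmod (\<Phi> n y))^2 = pmf (D n) y" for n y
    by (simp add: \<Phi>_def)
  have qa: "qadvice \<Gamma> n (\<Phi> n)" for n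
  proof -
    have "y \<notin> adv_strings \<Gamma> n \<Longrightarrow> \<Phi> n y = 0" for y
      using sup[of n] by (auto simp: \<Phi>_def set_pmf_iff)
    moreover have "(\<Sum>y\<in>adv_strings \<Gamma> n. (cmod (\<Phi> n y))^2) = 1"
      using sum_pmf_eq_1[OF finite_adv[OF fin] sup] by (simp add: c)
    ultimately show ?thesis by (simp add: qadvice_def)
  qed
  have "prob_output M \<Gamma> x (\<Phi> (length x)) (x \<in> L) \<ge> 1 - \<epsilon>" for x
    using pr[of x] by (simp add: decomp[OF fin, of M x "\<Phi> (length x)"] c expect_eq[OF fin sup])
  then show "\<exists>(M :: 'a qfa) \<Gamma> (\<Phi> :: nat \<Rightarrow> nat list \<Rightarrow> complex) \<epsilon>.
       finite \<Gamma> \<and> is_1qfa M \<Gamma> \<and> (\<forall>n. qadvice \<Gamma> n (\<Phi> n))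
       \<and> 0 \<le> \<epsilon> \<and> \<epsilon> < 1/2
       \<and> (\<forall>x. prob_output M \<Gamma> x (\<Phi> (length x)) (x \<in> L) \<ge> 1 - \<epsilon>)"
    using fin M qa e by blast
next
  assume "\<exists>(M :: 'a qfa) \<Gamma> (\<Phi> :: nat \<Rightarrow> nat list \<Rightarrow> complex) \<epsilon>.
       finite \<Gamma> \<and> is_1qfa M \<Gamma> \<and> (\<forall>n. qadvice \<Gamma> n (\<Phi> n))
       \<and> 0 \<le> \<epsilon> \<and> \<epsilon> < 1/2
       \<and> (\<forall>x. prob_output M \<Gamma> x (\<Phi> (length x)) (x \<in> L) \<ge> 1 - \<epsilon>)"
  then obtain M :: "'a qfa" and \<Gamma> \<Phi> \<epsilon> where
    fin: "finite \<Gamma>" and M: "is_1qfa M \<Gamma>" and qa: "\<And>n. qadvice \<Gamma> n (\<Phi> n)"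
    and e: "0 \<le> \<epsilon>" "\<epsilon> < 1/2"
    and pr: "\<And>x. prob_output M \<Gamma> x (\<Phi> (length x)) (x \<in> L) \<ge> 1 - \<epsilon>"
    by blast
  define D where "D n = embed_pmf (\<lambda>y. (cmod (\<Phi> n y))^2)" for n
  have pD: "pmf (D n) y = (cmod (\<Phi> n y))^2" for n y
    unfolding D_def by (rule embed_ok[OF fin qa])
  have sup: "set_pmf (D n) \<subseteq> adv_strings \<Gamma> n" for n
    using qa[of n] by (auto simp: set_pmf_iff pD qadvice_def)
  have "measure_pmf.expectation (D (length x))
              (\<lambda>y. prob_output M \<Gamma> x (basis_adv y) (x \<in> L)) \<ge> 1 - \<epsilon>" for x
    using pr[of x] by (simp add: decomp[OF fin, of M x "\<Phi> (length x)"] pD expect_eq[OF fin sup])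
  then show "in_1QFA_Rn L"
    unfolding in_1QFA_Rn_def using fin M e sup by blast
qed

end
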